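(* The center of $SV\#_\alpha G$ equals the invariant subalgebra $(SV)^G$, and $(SV)^G$ is generated as an algebra by $x_1^\ell,\ldots,x_n^\ell$ and $x_1x_2\cdots x_n$.
   Context: Fix integers $n\ge 3$ and $\ell\ge 2$, and let $\zeta$ be a primitive $\ell$-th root of unity. Let $V=\mathbb{C}^n$ with standard basis $x_1,\ldots,x_n$, $SV=\mathbb{C}[x_1,\ldots,x_n]$ its symmetric algebra, and let $G$ be the group of all diagonal matrices $g\in SL_n(\mathbb{C})$ with $g^\ell=1$, acting on $SV$. For $i=1,\ldots,n$ (indices mod $n$) let $g_i\in G$ be given by $g_i(x_i)=\zeta x_i$, $g_i(x_{i+1})=\zeta^{-1}x_{i+1}$, $g_i(x_j)=x_j$ otherwise; $g_1,\ldots,g_{n-1}$ freely generate $G\cong(\mathbb{Z}/\ell\mathbb{Z})^{n-1}$. Define the 2-cocycle $\alpha$ by $\alpha(g_1^{i_1}\cdots g_{n-1}^{i_{n-1}},g_1^{j_1}\cdots g_{n-1}^{j_{n-1}})=\zeta^{-i_1j_2-\cdots-i_{n-2}j_{n-1}}$. $SV\#_\alpha G$ is $SV\otimes\mathbb{C}G$ with product $(r\otimes g)(s\otimes h)=\alpha(g,h)\,r\,(g\cdot s)\otimes gh$. *)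

theory Defs
  imports Complex_Main "HOL-Library.Poly_Mapping"
begin

text \<open>Polynomials in variables x_0, x_1, ... (0-indexed; x_j here is x_{j+1} of the paper),
  as finitely supported maps from monomials (exponent vectors) to complex coefficients,
  with the convolution ring structure of Poly_Mapping.\<close>
type_synonym cpoly = "(nat \<Rightarrow>\<^sub>0 nat) \<Rightarrow>\<^sub>0 complex"

definition SV :: "nat \<Rightarrow> cpoly set" where
  "SV n = {p. \<forall>m \<in> Poly_Mapping.keys p. Poly_Mapping.keys m \<subseteq> {..<n}}"

definition var_pow :: "nat \<Rightarrow> nat \<Rightarrow> cpoly" where
  "var_pow i e = Poly_Mapping.single (Poly_Mapping.single i e) 1"

definition all_vars_prod :: "nat \<Rightarrow> cpoly" where
  "all_vars_prod n = Poly_Mapping.single (\<Sum>i<n. Poly_Mapping.single i 1) 1"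

text \<open>Group G, written in the coordinates w.r.t. the free generators g_1..g_{n-1}:
  c represents g_1^{c 0} * ... * g_{n-1}^{c (n-2)}, with 0 <= c k < l.\<close>
definition Grp :: "nat \<Rightarrow> nat \<Rightarrow> (nat \<Rightarrow> nat) set" where
  "Grp n l = {c. (\<forall>k<n-1. c k < l) \<and> (\<forall>k\<ge>n-1. c k = 0)}"

definition gmul :: "nat \<Rightarrow> (nat \<Rightarrow> nat) \<Rightarrow> (nat \<Rightarrow> nat) \<Rightarrow> (nat \<Rightarrow> nat)" where
  "gmul l c d = (\<lambda>k. (c k + d k) mod l)"

definition gunit :: "nat \<Rightarrow> nat" where
  "gunit = (\<lambda>_. 0)"

text \<open>Diagonal entry of g at variable x_j: g_{k} multiplies x_k by zeta and x_{k+1} by zeta^-1.\<close>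
definition diag_entry :: "complex \<Rightarrow> (nat \<Rightarrow> nat) \<Rightarrow> nat \<Rightarrow> complex" where
  "diag_entry z c j = z powi (int (c j) - (if j = 0 then 0 else int (c (j - 1))))"

definition chi :: "nat \<Rightarrow> complex \<Rightarrow> (nat \<Rightarrow> nat) \<Rightarrow> (nat \<Rightarrow>\<^sub>0 nat) \<Rightarrow> complex" where
  "chi n z c m = (\<Prod>j<n. diag_entry z c j ^ Poly_Mapping.lookup m j)"

definition act :: "nat \<Rightarrow> complex \<Rightarrow> (nat \<Rightarrow> nat) \<Rightarrow> cpoly \<Rightarrow> cpoly" where
  "act n z c p = Poly_Mapping.mapp (\<lambda>m a. chi n z c m * a) p"

definition cocycle :: "nat \<Rightarrow> complex \<Rightarrow> (nat \<Rightarrow> nat) \<Rightarrow> (nat \<Rightarrow> nat) \<Rightarrow> complex" where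
  "cocycle n z c d = z powi (- (\<Sum>k<n-2. int (c k) * int (d (k + 1))))"

text \<open>SV #_alpha G: elements sum_g F(g) \<otimes> g, represented by F : G \<Rightarrow> SV.\<close>
definition Smash :: "nat \<Rightarrow> nat \<Rightarrow> ((nat \<Rightarrow> nat) \<Rightarrow> cpoly) set" where
  "Smash n l = {F. (\<forall>g. g \<notin> Grp n l \<longrightarrow> F g = 0) \<and> (\<forall>g\<in>Grp n l. F g \<in> SV n)}"

definition smash_mult :: "nat \<Rightarrow> nat \<Rightarrow> complex \<Rightarrow> ((nat \<Rightarrow> nat) \<Rightarrow> cpoly)
    \<Rightarrow> ((nat \<Rightarrow> nat) \<Rightarrow> cpoly) \<Rightarrow> ((nat \<Rightarrow> nat) \<Rightarrow> cpoly)" where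
  "smash_mult n l z F H = (\<lambda>k. \<Sum>g\<in>Grp n l. \<Sum>h\<in>Grp n l.
      if gmul l g h = k
      then Poly_Mapping.map (\<lambda>a. cocycle n z g h * a) (F g * act n z g (H h))
      else 0)"

definition smash_center :: "nat \<Rightarrow> nat \<Rightarrow> complex \<Rightarrow> ((nat \<Rightarrow> nat) \<Rightarrow> cpoly) set" where
  "smash_center n l z = {Zc \<in> Smash n l. \<forall>W \<in> Smash n l. smash_mult n l z Zc W = smash_mult n l z W Zc}"

definition embed_one :: "cpoly \<Rightarrow> ((nat \<Rightarrow> nat) \<Rightarrow> cpoly)" where
  "embed_one r = (\<lambda>g. if g = gunit then r else 0)"

definition invariants :: "nat \<Rightarrow> nat \<Rightarrow> complex \<Rightarrow> cpoly set" where
  "invariants n l z = {p \<in> SV n. \<forall>g\<in>Grp n l. act n z g p = p}"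

inductive_set gen_subalg :: "cpoly set \<Rightarrow> cpoly set" for S where
  gen: "p \<in> S \<Longrightarrow> p \<in> gen_subalg S"
| const: "Poly_Mapping.single 0 a \<in> gen_subalg S"
| add: "p \<in> gen_subalg S \<Longrightarrow> q \<in> gen_subalg S \<Longrightarrow> p + q \<in> gen_subalg S"
| mult: "p \<in> gen_subalg S \<Longrightarrow> q \<in> gen_subalg S \<Longrightarrow> p * q \<in> gen_subalg S"

end

theory Submission imports Defs "HOL-Library.FuncSet" begin

lemma map_one_mult[simp]: "Poly_Mapping.map ((*) (1::complex)) p = p"
  by (rule poly_mapping_eqI) (simp add: map.rep_eq when_def)

lemma map_mult_zero[simp]: "Poly_Mapping.map ((*) (c::complex)) 0 = 0"
  by (rule poly_mapping_eqI) (simp add: map.rep_eq when_def)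

lemma mapp_zero[simp]: "Poly_Mapping.mapp f 0 = 0"
  by (rule poly_mapping_eqI) (simp add: lookup_mapp when_def)

lemma diag_unit[simp]: "diag_entry z gunit j = 1"
  by (simp add: diag_entry_def gunit_def)

lemma finite_Grp: "finite (Grp n l)"
proof -
  let ?f = "\<lambda>f k. if k < n - 1 then f k else (0::nat)"
  have "Grp n l \<subseteq> ?f ` (PiE {..<n-1} (\<lambda>_. {..<l}))"
  proof
    fix c assume c: "c \<in> Grp n l"
    have "c = ?f (restrict c {..<n-1})"
      using c by (auto simp: Grp_def fun_eq_iff restrict_apply)
    moreover have "restrict c {..<n-1} \<in> PiE {..<n-1} (\<lambda>_. {..<l})"
      using c by (auto simp: Grp_def)
    ultimately show "c \<in> ?f ` (PiE {..<n-1} (\<lambda>_. {..<l}))" by blast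
  qed
  moreover have "finite (?f ` (PiE {..<n-1} (\<lambda>_. {..<l})))"
    by (intro finite_imageI finite_PiE) auto
  ultimately show ?thesis by (rule finite_subset)
qed

lemma gunit_Grp: "0 < l \<Longrightarrow> gunit \<in> Grp n l"
  by (simp add: Grp_def gunit_def)

lemma gmul_unit_left: "h \<in> Grp n l \<Longrightarrow> gmul l gunit h = h"
  by (auto simp: Grp_def gmul_def gunit_def fun_eq_iff) (metis mod_0 mod_less not_less)

lemma gmul_unit_right: "h \<in> Grp n l \<Longrightarrow> gmul l h gunit = h"
  by (auto simp: Grp_def gmul_def gunit_def fun_eq_iff) (metis mod_0 mod_less not_less)

lemma cocycle_unit_left[simp]: "cocycle n z gunit h = 1"
  by (simp add: cocycle_def gunit_def)

lemma cocycle_unit_right[simp]: "cocycle n z h gunit = 1"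
  by (simp add: cocycle_def gunit_def)

lemma chi_unit[simp]: "chi n z gunit m = 1"
  by (simp add: chi_def)

lemma act_unit[simp]: "act n z gunit p = p"
  by (rule poly_mapping_eqI) (simp add: act_def lookup_mapp when_def in_keys_iff)

lemma smash_left_one:
  assumes "0 < l"
  shows "smash_mult n l z (embed_one r) H k = (if k \<in> Grp n l then r * H k else 0)"
proof -
  let ?F = "\<lambda>g. \<Sum>h\<in>Grp n l. if gmul l g h = k
      then Poly_Mapping.map (\<lambda>a. cocycle n z g h * a) (embed_one r g * act n z g (H h)) else 0"
  have "smash_mult n l z (embed_one r) H k = (\<Sum>g\<in>Grp n l. ?F g)"
    by (simp add: smash_mult_def)
  also have "\<dots> = (\<Sum>g\<in>Grp n l. if g = gunit then ?F gunit else 0)"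
    by (rule sum.cong) (auto simp: embed_one_def intro!: sum.neutral)
  also have "\<dots> = ?F gunit" using gunit_Grp[OF assms] finite_Grp by simp
  also have "\<dots> = (\<Sum>h\<in>Grp n l. if h = k then r * H k else 0)"
    by (rule sum.cong) (auto simp: gmul_unit_left embed_one_def)
  also have "\<dots> = (if k \<in> Grp n l then r * H k else 0)" using finite_Grp by simp
  finally show ?thesis .
qed

lemma smash_right_one:
  assumes "0 < l"
  shows "smash_mult n l z H (embed_one r) k = (if k \<in> Grp n l then H k * act n z k r else 0)"
proof -
  let ?F = "\<lambda>g. \<Sum>h\<in>Grp n l. if gmul l g h = k
      then Poly_Mapping.map (\<lambda>a. cocycle n z g h * a) (H g * act n z g (embed_one r h)) else 0"
  have "smash_mult n l z H (embed_one r) k = (\<Sum>g\<in>Grp n l. ?F g)"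
    by (simp add: smash_mult_def)
  also have "\<dots> = (\<Sum>g\<in>Grp n l. if g = k then H k * act n z k r else 0)"
  proof (rule sum.cong)
    fix g assume g: "g \<in> Grp n l"
    have "?F g = (\<Sum>h\<in>Grp n l. if h = gunit then (if g = k then H k * act n z k r else 0) else 0)"
      by (rule sum.cong) (auto simp: embed_one_def gmul_unit_right[OF g] act_def)
    also have "\<dots> = (if g = k then H k * act n z k r else 0)"
      using gunit_Grp[OF assms] finite_Grp by simp
    finally show "?F g = (if g = k then H k * act n z k r else 0)" .
  qed simp
  also have "\<dots> = (if k \<in> Grp n l then H k * act n z k r else 0)" using finite_Grp by simp
  finally show ?thesis .
qed

lemma SV_zero[simp]: "0 \<in> SV n" by (simp add: SV_def)

lemma chi_single1: "j < n \<Longrightarrow> chi n z c (Poly_Mapping.single j 1) = diag_entry z c j"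
proof -
  assume j: "j < n"
  have "(\<lambda>t. diag_entry z c t ^ Poly_Mapping.lookup (Poly_Mapping.single j 1) t)
     = (\<lambda>t. if j = t then diag_entry z c t else 1)"
    by (auto simp: lookup_single when_def)
  hence "chi n z c (Poly_Mapping.single j 1) = (\<Prod>t<n. if j = t then diag_entry z c t else 1)"
    unfolding chi_def by metis
  thus ?thesis using j by simp
qed

lemma act_single: "act n z c (Poly_Mapping.single m a) = Poly_Mapping.single m (chi n z c m * a)"
  by (rule poly_mapping_eqI) (simp add: act_def lookup_mapp when_def lookup_single)

lemma zpow_ne1:
  assumes "\<forall>k. 0 < k \<and> k < l \<longrightarrow> z ^ k \<noteq> 1" "0 < k" "k < l"
  shows "(z::complex) ^ k \<noteq> 1" using assms by blast

lemma center_zero: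
  assumes l: "l \<ge> 2" and prim: "\<forall>k. 0 < k \<and> k < l \<longrightarrow> z ^ k \<noteq> 1"
    and Zc: "Zc \<in> smash_center n l z" and k: "k \<in> Grp n l" "k \<noteq> gunit"
  shows "Zc k = 0"
proof -
  from k obtain i where i: "k i \<noteq> 0" by (auto simp: gunit_def)
  define j where "j = (LEAST j. k j \<noteq> 0)"
  have kj: "k j \<noteq> 0" using i unfolding j_def by (rule LeastI)
  have below: "t < j \<Longrightarrow> k t = 0" for t unfolding j_def using not_less_Least by blast
  have jn: "j < n - 1" using kj k(1) unfolding Grp_def by (cases "j < n - 1") auto
  have kl: "k j < l" using jn k(1) by (auto simp: Grp_def)
  define r where "r = (Poly_Mapping.single (Poly_Mapping.single j 1) 1 :: cpoly)"
  have rSV: "r \<in> SV n" using jn by (auto simp: r_def SV_def)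
  have WS: "embed_one r \<in> Smash n l"
    using rSV gunit_Grp[of l n] l by (auto simp: Smash_def embed_one_def)
  have de: "diag_entry z k j = z ^ k j"
  proof (cases j)
    case 0 thus ?thesis by (simp add: diag_entry_def)
  next
    case (Suc t) thus ?thesis using below[of t] by (simp add: diag_entry_def)
  qed
  define \<chi> where "\<chi> = z ^ k j"
  have chi1: "\<chi> \<noteq> 1" unfolding \<chi>_def using prim kj kl by auto
  have actr: "act n z k r = Poly_Mapping.single 0 \<chi> * r"
  proof -
    have c1: "chi n z k (Poly_Mapping.single j 1) = \<chi>"
      using chi_single1[of j n z k] jn de \<chi>_def by simp
    show ?thesis by (simp only: r_def act_single c1 mult_single add_0_left mult_1_right)
  qed
  from Zc WS have "smash_mult n l z Zc (embed_one r) = smash_mult n l z (embed_one r) Zc"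
    by (auto simp: smash_center_def)
  hence "smash_mult n l z Zc (embed_one r) k = smash_mult n l z (embed_one r) Zc k" by simp
  hence "Zc k * act n z k r = r * Zc k"
    using k(1) l by (simp add: smash_left_one smash_right_one)
  hence "Zc k * r * (Poly_Mapping.single 0 \<chi> - 1) = 0"
    by (simp add: actr algebra_simps)
  moreover have "r \<noteq> 0" by (metis lookup_single_eq lookup_zero one_neq_zero r_def)
  moreover have "Poly_Mapping.single 0 \<chi> - 1 \<noteq> (0::cpoly)"
  proof
    assume "Poly_Mapping.single 0 \<chi> - 1 = (0::cpoly)"
    hence "Poly_Mapping.lookup (Poly_Mapping.single 0 \<chi> - 1 :: cpoly) 0 = 0" by simp
    thus False using chi1 by (simp add: lookup_minus)
  qed
  ultimately show ?thesis by simp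
qed

lemma SV_one[simp]: "1 \<in> SV n" by (simp add: SV_def)

lemma center_eq:
  assumes l: "l \<ge> 2" and prim: "\<forall>k. 0 < k \<and> k < l \<longrightarrow> z ^ k \<noteq> 1"
  shows "smash_center n l z = embed_one ` invariants n l z"
proof
  have l0: "0 < l" using l by simp
  show "smash_center n l z \<subseteq> embed_one ` invariants n l z"
  proof
    fix Zc assume Zc: "Zc \<in> smash_center n l z"
    hence S: "Zc \<in> Smash n l" by (simp add: smash_center_def)
    define f where "f = Zc gunit"
    have eq: "Zc = embed_one f"
    proof
      fix k show "Zc k = embed_one f k"
      proof (cases "k \<in> Grp n l")
        case True thus ?thesis using center_zero[OF l prim Zc True] by (auto simp: embed_one_def f_def)
      next
        case False thus ?thesis using S gunit_Grp[OF l0] by (auto simp: Smash_def embed_one_def)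
      qed
    qed
    have "f \<in> invariants n l z"
      unfolding invariants_def
    proof (intro CollectI conjI ballI)
      show "f \<in> SV n" using S gunit_Grp[OF l0] by (simp add: Smash_def f_def)
      fix h assume h: "h \<in> Grp n l"
      define W where "W = (\<lambda>g. if g = h then (1::cpoly) else 0)"
      have WS: "W \<in> Smash n l" using h by (auto simp: Smash_def W_def)
      from Zc WS have "smash_mult n l z Zc W = smash_mult n l z W Zc"
        by (auto simp: smash_center_def)
      hence "smash_mult n l z (embed_one f) W h = smash_mult n l z W (embed_one f) h"
        by (simp add: eq)
      thus "act n z h f = f"
        using h l0 by (simp add: smash_left_one smash_right_one W_def)
    qed
    thus "Zc \<in> embed_one ` invariants n l z" using eq by blast
  qed
  show "embed_one ` invariants n l z \<subseteq> smash_center n l z"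
  proof
    fix Zc assume "Zc \<in> embed_one ` invariants n l z"
    then obtain f where f: "f \<in> invariants n l z" and Zc: "Zc = embed_one f" by blast
    have "Zc \<in> Smash n l" using f gunit_Grp[OF l0]
      by (auto simp: Smash_def Zc embed_one_def invariants_def)
    moreover have "smash_mult n l z Zc W = smash_mult n l z W Zc" for W
    proof
      fix k show "smash_mult n l z Zc W k = smash_mult n l z W Zc k"
        using f l0 by (auto simp: Zc smash_left_one smash_right_one invariants_def mult.commute)
    qed
    ultimately show "Zc \<in> smash_center n l z" by (simp add: smash_center_def)
  qed
qed

definition Inv :: "nat \<Rightarrow> nat \<Rightarrow> complex \<Rightarrow> (nat \<Rightarrow>\<^sub>0 nat) \<Rightarrow> bool" where
  "Inv n l z m \<longleftrightarrow> (\<forall>c\<in>Grp n l. chi n z c m = 1)"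

lemma invariants_char:
  "p \<in> invariants n l z \<longleftrightarrow> p \<in> SV n \<and> (\<forall>m\<in>Poly_Mapping.keys p. Inv n l z m)"
proof -
  have "act n z c p = p \<longleftrightarrow> (\<forall>m\<in>Poly_Mapping.keys p. chi n z c m = 1)" for c
  proof
    assume a: "act n z c p = p"
    show "\<forall>m\<in>Poly_Mapping.keys p. chi n z c m = 1"
    proof
      fix m assume m: "m \<in> Poly_Mapping.keys p"
      have "Poly_Mapping.lookup (act n z c p) m = Poly_Mapping.lookup p m" using a by simp
      hence "chi n z c m * Poly_Mapping.lookup p m = 1 * Poly_Mapping.lookup p m"
        using m by (simp add: act_def lookup_mapp when_def)
      thus "chi n z c m = 1" using m by (simp add: in_keys_iff)
    qed
  next
    assume a: "\<forall>m\<in>Poly_Mapping.keys p. chi n z c m = 1"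
    show "act n z c p = p"
      by (rule poly_mapping_eqI) (simp add: act_def lookup_mapp when_def a in_keys_iff)
  qed
  thus ?thesis by (auto simp: invariants_def Inv_def)
qed

lemma chi_add: "chi n z c (a + b) = chi n z c a * chi n z c b"
  by (simp add: chi_def lookup_add power_add prod.distrib)

lemma chi_zero[simp]: "chi n z c 0 = 1"
  by (simp add: chi_def)

lemma Inv_add: "Inv n l z a \<Longrightarrow> Inv n l z b \<Longrightarrow> Inv n l z (a + b)"
  by (simp add: Inv_def chi_add)

lemma chi_single: "j < n \<Longrightarrow> chi n z c (Poly_Mapping.single j e) = diag_entry z c j ^ e"
proof -
  assume j: "j < n"
  have "(\<lambda>t. diag_entry z c t ^ Poly_Mapping.lookup (Poly_Mapping.single j e) t)
     = (\<lambda>t. if j = t then diag_entry z c t ^ e else 1)"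
    by (auto simp: lookup_single when_def)
  hence "chi n z c (Poly_Mapping.single j e) = (\<Prod>t<n. if j = t then diag_entry z c t ^ e else 1)"
    unfolding chi_def by metis
  thus ?thesis using j by simp
qed

lemma diag_prod:
  assumes "z \<noteq> 0" "N \<ge> 1"
  shows "(\<Prod>j<N. diag_entry z c j) = z powi int (c (N - 1))"
  using assms(2)
proof (induction N rule: dec_induct)
  case base thus ?case by (simp add: diag_entry_def)
next
  case (step N)
  have "(\<Prod>j<Suc N. diag_entry z c j) = z powi int (c (N - 1)) * diag_entry z c N"
    using step by simp
  also have "\<dots> = z powi int (c (N - 1)) * z powi (int (c N) - int (c (N - 1)))"
    using step(1) by (simp add: diag_entry_def)
  also have "\<dots> = z powi (int (c (N - 1)) + (int (c N) - int (c (N - 1))))"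
    using assms(1) by (rule power_int_add[symmetric, OF disjI1])
  finally show ?case by simp
qed

lemma gen_invariant:
  assumes l: "l \<ge> 2" and zl: "z ^ l = 1" and n: "n \<ge> 1"
    and p: "p \<in> gen_subalg ({var_pow i l | i. i < n} \<union> {all_vars_prod n})"
  shows "p \<in> SV n \<and> (\<forall>m\<in>Poly_Mapping.keys p. Inv n l z m)"
  using p
proof (induction p rule: gen_subalg.induct)
  case (gen p)
  have z0: "z \<noteq> 0"
  proof
    assume "z = 0" with zl l show False by (simp add: power_0_left)
  qed
  show ?case
  proof (cases "p = all_vars_prod n")
    case True
    let ?m = "\<Sum>i<n. Poly_Mapping.single i (1::nat)"
    have lk: "Poly_Mapping.lookup ?m j = (if j < n then 1 else 0)" for j
      by (simp add: lookup_sum lookup_single when_def)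
    have keysm: "Poly_Mapping.keys ?m \<subseteq> {..<n}"
      using lk by (auto simp: in_keys_iff split: if_splits)
    have "Inv n l z ?m"
      unfolding Inv_def
    proof
      fix c assume c: "c \<in> Grp n l"
      have "chi n z c ?m = (\<Prod>j<n. diag_entry z c j)"
        unfolding chi_def by (rule prod.cong) (use lk in auto)
      also have "\<dots> = z powi int (c (n - 1))" using diag_prod[OF z0 n] .
      also have "c (n - 1) = 0" using c by (simp add: Grp_def)
      finally show "chi n z c ?m = 1" by simp
    qed
    thus ?thesis using True keysm by (simp add: all_vars_prod_def SV_def)
  next
    case False
    then obtain i where i: "i < n" "p = var_pow i l" using gen by auto
    have "Inv n l z (Poly_Mapping.single i l)"
      unfolding Inv_def
    proof
      fix c assume c: "c \<in> Grp n l"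
      have "chi n z c (Poly_Mapping.single i l) = diag_entry z c i ^ l" using chi_single[OF i(1)] .
      also have "\<dots> = 1"
        by (simp add: diag_entry_def power_int_power' mult.commute power_int_mult zl)
      finally show "chi n z c (Poly_Mapping.single i l) = 1" .
    qed
    thus ?thesis using i l by (auto simp: var_pow_def SV_def)
  qed
next
  case (const a)
  show ?case by (auto simp: SV_def Inv_def)
next
  case (add p q)
  thus ?case using keys_add[of p q] unfolding SV_def by blast
next
  case (mult p q)
  have "Poly_Mapping.keys (p * q) \<subseteq> {a + b |a b. a \<in> Poly_Mapping.keys p \<and> b \<in> Poly_Mapping.keys q}"
    by (rule keys_mult)
  have "Poly_Mapping.keys m \<subseteq> {..<n} \<and> Inv n l z m" if m: "m \<in> Poly_Mapping.keys (p * q)" for m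
  proof -
    obtain a b where ab: "m = a + b" "a \<in> Poly_Mapping.keys p" "b \<in> Poly_Mapping.keys q"
    proof -
      have "m \<in> {a + b |a b. a \<in> Poly_Mapping.keys p \<and> b \<in> Poly_Mapping.keys q}"
        using keys_mult[of p q] m by (rule subsetD)
      thus ?thesis using that by blast
    qed
    have "Poly_Mapping.keys m \<subseteq> Poly_Mapping.keys a \<union> Poly_Mapping.keys b"
      using ab(1) keys_add[of a b] by simp
    moreover have "Poly_Mapping.keys a \<subseteq> {..<n}" "Poly_Mapping.keys b \<subseteq> {..<n}"
      using mult ab by (auto simp: SV_def)
    moreover have "Inv n l z m" using mult ab by (simp add: Inv_add)
    ultimately show ?thesis by blast
  qed
  thus ?case by (simp add: SV_def)
qed

lemma zpow_mod: "(z::complex) ^ l = 1 \<Longrightarrow> z ^ a = z ^ (a mod l)"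
proof -
  assume zl: "z ^ l = 1"
  have "z ^ a = z ^ (l * (a div l) + a mod l)" by simp
  also have "\<dots> = z ^ (a mod l)" by (simp only: power_add power_mult zl) simp
  finally show ?thesis .
qed

lemma zpow_eq:
  assumes zl: "(z::complex) ^ l = 1" and prim: "\<forall>k. 0 < k \<and> k < l \<longrightarrow> z ^ k \<noteq> 1"
    and l: "0 < l" and e: "z ^ a = z ^ b"
  shows "a mod l = b mod l"
proof -
  have z0: "z \<noteq> 0"
  proof
    assume "z = 0" with zl l show False by (simp add: power_0_left)
  qed
  have e2: "z ^ (a mod l) = z ^ (b mod l)" using e zpow_mod[OF zl, of a] zpow_mod[OF zl, of b] by simp
  have main: "x = y" if xy: "y \<le> x" "x < l" "z ^ x = z ^ y" for x y
  proof (rule ccontr)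
    assume "x \<noteq> y"
    hence "0 < x - y" "x - y < l" using xy by auto
    hence "z ^ (x - y) \<noteq> 1" using prim by blast
    moreover have "z ^ (x - y) * z ^ y = z ^ y" using xy by (simp add: power_add[symmetric])
    ultimately show False using z0 by simp
  qed
  show ?thesis
  proof (cases "b mod l \<le> a mod l")
    case True thus ?thesis using main[OF True _ e2] l by simp
  next
    case False thus ?thesis using main[of "a mod l" "b mod l"] e2 l by simp
  qed
qed

lemma Inv_step:
  assumes l: "l \<ge> 2" and z0: "z \<noteq> 0" and k: "Suc k < n" and I: "Inv n l z m"
  shows "z ^ Poly_Mapping.lookup m k = z ^ Poly_Mapping.lookup m (Suc k)"
proof -
  define d where "d = (\<lambda>t. if t = k then 1 else (0::nat))"
  have dG: "d \<in> Grp n l" using k l by (auto simp: Grp_def d_def)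
  have de: "diag_entry z d j = (if j = k then z else 1) * (if j = Suc k then inverse z else 1)" for j
  proof (cases j)
    case 0 thus ?thesis by (auto simp: diag_entry_def d_def)
  next
    case (Suc j') thus ?thesis by (auto simp: diag_entry_def d_def power_int_minus)
  qed
  have "chi n z d m = (\<Prod>j<n. (if j = k then z ^ Poly_Mapping.lookup m j else 1) *
        (if j = Suc k then inverse z ^ Poly_Mapping.lookup m j else 1))"
    unfolding chi_def by (rule prod.cong) (auto simp: de power_mult_distrib)
  also have "\<dots> = z ^ Poly_Mapping.lookup m k * inverse z ^ Poly_Mapping.lookup m (Suc k)"
    using k by (simp add: prod.distrib)
  finally have "z ^ Poly_Mapping.lookup m k * inverse z ^ Poly_Mapping.lookup m (Suc k) = 1"
    using I dG by (simp add: Inv_def)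
  thus ?thesis using z0 by (simp add: power_inverse field_simps)
qed

lemma Inv_cong:
  assumes l: "l \<ge> 2" and zl: "z ^ l = 1" and prim: "\<forall>k. 0 < k \<and> k < l \<longrightarrow> z ^ k \<noteq> 1"
    and I: "Inv n l z m"
  shows "i < n \<Longrightarrow> Poly_Mapping.lookup m i mod l = Poly_Mapping.lookup m 0 mod l"
proof (induction i)
  case 0 thus ?case by simp
next
  case (Suc i)
  have z0: "z \<noteq> 0"
  proof
    assume "z = 0" with zl l show False by (simp add: power_0_left)
  qed
  have "z ^ Poly_Mapping.lookup m i = z ^ Poly_Mapping.lookup m (Suc i)"
    using Inv_step[OF l z0 Suc(2) I] .
  hence "Poly_Mapping.lookup m i mod l = Poly_Mapping.lookup m (Suc i) mod l"
    using zpow_eq[OF zl prim] l by (metis less_le_trans pos2)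
  moreover have "Poly_Mapping.lookup m i mod l = Poly_Mapping.lookup m 0 mod l"
    using Suc.IH Suc.prems by simp
  ultimately show ?case by simp
qed

lemma monom_expand:
  fixes m :: "nat \<Rightarrow>\<^sub>0 nat"
  assumes "Poly_Mapping.keys m \<subseteq> {..<n}"
  shows "m = (\<Sum>i<n. Poly_Mapping.single i (Poly_Mapping.lookup m i))"
proof (rule poly_mapping_eqI)
  fix k
  have "Poly_Mapping.lookup (\<Sum>i<n. Poly_Mapping.single i (Poly_Mapping.lookup m i)) k
      = (\<Sum>x<n. Poly_Mapping.lookup m x when x = k)"
    by (simp only: lookup_sum lookup_single)
  also have "\<dots> = (\<Sum>x<n. if x = k then Poly_Mapping.lookup m x else 0)"
    by (simp only: when_def)
  also have "\<dots> = (if k < n then Poly_Mapping.lookup m k else 0)" by (subst sum.delta) auto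
  also have "\<dots> = Poly_Mapping.lookup m k" using assms by (auto simp: in_keys_iff)
  finally show "Poly_Mapping.lookup m k = Poly_Mapping.lookup (\<Sum>i<n. Poly_Mapping.single i (Poly_Mapping.lookup m i)) k" by (rule sym)
qed

lemma poly_expand:
  fixes p :: cpoly
  shows "p = (\<Sum>m\<in>Poly_Mapping.keys p. Poly_Mapping.single m (Poly_Mapping.lookup p m))"
proof (rule poly_mapping_eqI)
  fix k
  have "Poly_Mapping.lookup (\<Sum>m\<in>Poly_Mapping.keys p. Poly_Mapping.single m (Poly_Mapping.lookup p m)) k
      = (\<Sum>x\<in>Poly_Mapping.keys p. Poly_Mapping.lookup p x when x = k)"
    by (simp only: lookup_sum lookup_single)
  also have "\<dots> = (\<Sum>x\<in>Poly_Mapping.keys p. if x = k then Poly_Mapping.lookup p x else 0)"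
    by (simp only: when_def)
  also have "\<dots> = (if k \<in> Poly_Mapping.keys p then Poly_Mapping.lookup p k else 0)"
    by (subst sum.delta) auto
  also have "\<dots> = Poly_Mapping.lookup p k" by (auto simp: in_keys_iff)
  finally show "Poly_Mapping.lookup p k = Poly_Mapping.lookup (\<Sum>m\<in>Poly_Mapping.keys p. Poly_Mapping.single m (Poly_Mapping.lookup p m)) k" by (rule sym)
qed

lemma gs_single_add:
  "Poly_Mapping.single a 1 \<in> gen_subalg S \<Longrightarrow> Poly_Mapping.single b 1 \<in> gen_subalg S
   \<Longrightarrow> Poly_Mapping.single (a + b) (1::complex) \<in> gen_subalg S"
  using gen_subalg.mult[of "Poly_Mapping.single a 1" S "Poly_Mapping.single b 1"]
  by (simp add: mult_single)

lemma gs_one: "Poly_Mapping.single 0 1 \<in> gen_subalg S"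
  by (rule gen_subalg.const)

lemma gs_zero: "0 \<in> gen_subalg S"
  using gen_subalg.const[of 0 S] by simp

lemma gs_sum: "finite A \<Longrightarrow> (\<And>x. x \<in> A \<Longrightarrow> f x \<in> gen_subalg S) \<Longrightarrow> sum f A \<in> gen_subalg S"
  by (induction A rule: finite_induct) (auto intro: gs_zero gen_subalg.add)

lemma gs_L1:
  assumes i: "i < n"
  shows "Poly_Mapping.single (Poly_Mapping.single i (l * b)) (1::complex)
    \<in> gen_subalg ({var_pow i l | i. i < n} \<union> {all_vars_prod n})"
proof (induction b)
  case 0 thus ?case using gs_one by simp
next
  case (Suc b)
  have g: "Poly_Mapping.single (Poly_Mapping.single i l) (1::complex)
    \<in> gen_subalg ({var_pow i l | i. i < n} \<union> {all_vars_prod n})"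
    using i by (intro gen_subalg.gen) (auto simp: var_pow_def)
  have "Poly_Mapping.single i (l * Suc b) = Poly_Mapping.single i l + Poly_Mapping.single i (l * b)"
    by (simp add: single_add[symmetric])
  thus ?case using gs_single_add[OF g Suc] by simp
qed

lemma gs_L2:
  "N \<le> n \<Longrightarrow> Poly_Mapping.single (\<Sum>i<N. Poly_Mapping.single i (l * b i)) (1::complex)
    \<in> gen_subalg ({var_pow i l | i. i < n} \<union> {all_vars_prod n})"
proof (induction N)
  case 0 thus ?case using gs_one by simp
next
  case (Suc N)
  have "N < n" using Suc.prems by simp
  from gs_single_add[OF gs_L1[OF this, of l "b N"] Suc.IH] Suc.prems
  show ?case by (simp add: add.commute)
qed

lemma gs_L3:
  "Poly_Mapping.single (\<Sum>i<n. Poly_Mapping.single i r) (1::complex)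
    \<in> gen_subalg ({var_pow i l | i. i < n} \<union> {all_vars_prod n})"
proof (induction r)
  case 0 thus ?case using gs_one by simp
next
  case (Suc r)
  have g: "Poly_Mapping.single (\<Sum>i<n. Poly_Mapping.single i 1) (1::complex)
    \<in> gen_subalg ({var_pow i l | i. i < n} \<union> {all_vars_prod n})"
    by (intro gen_subalg.gen) (auto simp: all_vars_prod_def)
  have "(\<Sum>i<n. Poly_Mapping.single i (Suc r)) = (\<Sum>i<n. Poly_Mapping.single i 1) + (\<Sum>i<n. Poly_Mapping.single i r)"
    by (simp add: single_add[symmetric] sum.distrib[symmetric])
  thus ?case using gs_single_add[OF g Suc.IH] by simp
qed

lemma gs_monom:
  assumes l: "l \<ge> 2" and zl: "z ^ l = 1" and prim: "\<forall>k. 0 < k \<and> k < l \<longrightarrow> z ^ k \<noteq> 1"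
    and K: "Poly_Mapping.keys m \<subseteq> {..<n}" and I: "Inv n l z m"
  shows "Poly_Mapping.single m (1::complex) \<in> gen_subalg ({var_pow i l | i. i < n} \<union> {all_vars_prod n})"
proof -
  define r where "r = Poly_Mapping.lookup m 0 mod l"
  define b where "b = (\<lambda>i. Poly_Mapping.lookup m i div l)"
  have lk: "Poly_Mapping.lookup m i = r + l * b i" if "i < n" for i
    using Inv_cong[OF l zl prim I that] mod_mult_div_eq[of "Poly_Mapping.lookup m i" l]
    by (simp add: r_def b_def)
  have "m = (\<Sum>i<n. Poly_Mapping.single i (Poly_Mapping.lookup m i))" by (rule monom_expand[OF K])
  also have "\<dots> = (\<Sum>i<n. Poly_Mapping.single i r + Poly_Mapping.single i (l * b i))"
    by (rule sum.cong) (simp_all add: lk single_add)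
  also have "\<dots> = (\<Sum>i<n. Poly_Mapping.single i r) + (\<Sum>i<n. Poly_Mapping.single i (l * b i))"
    by (simp add: sum.distrib)
  finally have meq: "m = \<dots>" .
  show ?thesis
    by (subst meq) (rule gs_single_add[OF gs_L3 gs_L2[OF order_refl]])
qed

lemma invariants_sub:
  assumes l: "l \<ge> 2" and zl: "z ^ l = 1" and prim: "\<forall>k. 0 < k \<and> k < l \<longrightarrow> z ^ k \<noteq> 1"
    and p: "p \<in> invariants n l z"
  shows "p \<in> gen_subalg ({var_pow i l | i. i < n} \<union> {all_vars_prod n})"
proof -
  from p have SVp: "p \<in> SV n" and I: "\<forall>m\<in>Poly_Mapping.keys p. Inv n l z m"
    by (auto simp: invariants_char)
  have "p = (\<Sum>m\<in>Poly_Mapping.keys p. Poly_Mapping.single m (Poly_Mapping.lookup p m))"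
    by (rule poly_expand)
  also have "\<dots> \<in> gen_subalg ({var_pow i l | i. i < n} \<union> {all_vars_prod n})"
  proof (rule gs_sum)
    fix m assume m: "m \<in> Poly_Mapping.keys p"
    have "Poly_Mapping.single m (Poly_Mapping.lookup p m) = Poly_Mapping.single 0 (Poly_Mapping.lookup p m) * Poly_Mapping.single m 1"
      by (simp add: mult_single)
    moreover have "Poly_Mapping.single m (1::complex) \<in> gen_subalg ({var_pow i l | i. i < n} \<union> {all_vars_prod n})"
      using m SVp I by (intro gs_monom[OF l zl prim]) (auto simp: SV_def)
    ultimately show "Poly_Mapping.single m (Poly_Mapping.lookup p m) \<in> gen_subalg ({var_pow i l | i. i < n} \<union> {all_vars_prod n})"
      by (simp add: gen_subalg.mult gen_subalg.const)
  qed simp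
  finally show ?thesis .
qed

theorem mainTheorem5:
  fixes n l :: nat and z :: complex
  assumes "n \<ge> 3" and "l \<ge> 2"
    and "z ^ l = 1" and "\<forall>k. 0 < k \<and> k < l \<longrightarrow> z ^ k \<noteq> 1"
  shows "smash_center n l z = embed_one ` invariants n l z
    \<and> invariants n l z = gen_subalg ({var_pow i l | i. i < n} \<union> {all_vars_prod n})"
proof
  show "smash_center n l z = embed_one ` invariants n l z"
    using center_eq[OF assms(2,4)] .
  show "invariants n l z = gen_subalg ({var_pow i l | i. i < n} \<union> {all_vars_prod n})"
  proof
    show "invariants n l z \<subseteq> gen_subalg ({var_pow i l | i. i < n} \<union> {all_vars_prod n})"
      using invariants_sub[OF assms(2,3,4)] by blast
    show "gen_subalg ({var_pow i l | i. i < n} \<union> {all_vars_prod n}) \<subseteq> invariants n l z"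
    proof
      fix p assume "p \<in> gen_subalg ({var_pow i l | i. i < n} \<union> {all_vars_prod n})"
      from gen_invariant[OF assms(2,3) _ this] assms(1) show "p \<in> invariants n l z"
        by (simp add: invariants_char)
    qed
  qed
qed

end
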